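(* Fix integers $k,d\ge 1$ and let $\mathcal{M}$ be the metric space of (equivalence classes of) measurable $k$-colorings of $\mathbb{R}^d$ described in the context. For every integer $n\geq 1$ and all integers $r_1,\dots,r_d\geq 1$, the set $B_n^{(r_1,\dots,r_d)}$ is a closed subset of $\mathcal{M}$.
   Context: A measurable $k$-coloring of $\mathbb{R}^d$ is a map $f:\mathbb{R}^d\to\{1,\dots,k\}$ whose color classes are Lebesgue measurable. For measurable colorings $f,g$ and integer $n\ge1$, let $D_n(f,g)=\{x\in[-n,n]^d: f(x)\neq g(x)\}$, $d_n(f,g)=\lambda(D_n(f,g))/n^d$ where $\lambda$ is $d$-dimensional Lebesgue measure, and $d(f,g)=\sum_{n=1}^\infty d_n(f,g)/2^{n+1}$. $\mathcal{M}$ is the metric space obtained by identifying colorings at distance $0$, with metric $d$. A cube is a product of $d$ non-degenerate intervals of equal length. A splitting of a cube $[a_1,b_1]\times\cdots\times[a_d,b_d]$ with exactly $r_i$ cuts in the $i$-th dimension is given by points $a_i=z^i_0<z^i_1<\dots<z^i_{r_i}<z^i_{r_i+1}=b_i$ for each $i$, cutting the cube into the cuboids $\prod_i[z^i_{j_i},z^i_{j_i+1}]$; its granularity is the minimum of the lengths $z^i_{j+1}-z^i_j$ over all $i,j$. The splitting is fair for $f$ if the cuboids can be partitioned into two families each of whose unions contains exactly half of the Lebesgue measure of each color class of $f$ within the cube. $B_n^{(r_1,\dots,r_d)}$ is the set of colorings in $\mathcal{M}$ for which there exists at least one cube contained in $[-n,n]^d$ having a fair splitting with exactly $r_i$ cuts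 in the $i$-th dimension for each $i$ and granularity at least $1/n$. *)

theory Defs
  imports "HOL-Analysis.Analysis"
begin

text \<open>Points of R^d are vectors of type real^'d, where the finite type 'd has
  cardinality d (so d \<ge> 1 automatically). Colors are natural numbers 1..k.\<close>

definition meas_coloring :: "nat \<Rightarrow> (real^'d \<Rightarrow> nat) \<Rightarrow> bool" where
  "meas_coloring k f \<longleftrightarrow>
     (\<forall>x. f x \<in> {1..k}) \<and> (\<forall>c \<in> {1..k}. {x. f x = c} \<in> sets lebesgue)"

definition symbox :: "real \<Rightarrow> (real^'d) set" where
  "symbox N = cbox (- N *\<^sub>R One) (N *\<^sub>R One)"

definition col_dn :: "nat \<Rightarrow> (real^'d \<Rightarrow> nat) \<Rightarrow> (real^'d \<Rightarrow> nat) \<Rightarrow> real" where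
  "col_dn N f g =
     measure lebesgue {x \<in> symbox (real N). f x \<noteq> g x} / real N ^ CARD('d)"

definition col_dist :: "(real^'d \<Rightarrow> nat) \<Rightarrow> (real^'d \<Rightarrow> nat) \<Rightarrow> real" where
  "col_dist f g = (\<Sum>m. col_dn (Suc m) f g / 2 ^ (Suc m + 1))"

text \<open>A splitting of the cube cbox a (a + s One) with exactly r i cuts in dimension i:
  z i 0 = a$i < z i 1 < ... < z i (r i) < z i (r i + 1) = a$i + s,
  with granularity at least delta.\<close>
definition splitting ::
  "real^'d \<Rightarrow> real \<Rightarrow> ('d \<Rightarrow> nat) \<Rightarrow> ('d \<Rightarrow> nat \<Rightarrow> real) \<Rightarrow> bool" where
  "splitting a s r z \<longleftrightarrow>
     (\<forall>i. z i 0 = a $ i \<and> z i (r i + 1) = a $ i + s \<and>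
          (\<forall>j \<le> r i. z i j < z i (Suc j)))"

definition granularity_ge ::
  "('d \<Rightarrow> nat) \<Rightarrow> ('d \<Rightarrow> nat \<Rightarrow> real) \<Rightarrow> real \<Rightarrow> bool" where
  "granularity_ge r z delta \<longleftrightarrow> (\<forall>i. \<forall>j \<le> r i. z i (Suc j) - z i j \<ge> delta)"

definition cuboid_idx :: "('d \<Rightarrow> nat) \<Rightarrow> ('d \<Rightarrow> nat) set" where
  "cuboid_idx r = {J. \<forall>i. J i \<le> r i}"

definition cuboid :: "('d \<Rightarrow> nat \<Rightarrow> real) \<Rightarrow> ('d \<Rightarrow> nat) \<Rightarrow> (real^'d) set" where
  "cuboid z J = cbox (\<chi> i. z i (J i)) (\<chi> i. z i (Suc (J i)))"

definition fair_splitting ::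
  "nat \<Rightarrow> (real^'d \<Rightarrow> nat) \<Rightarrow> real^'d \<Rightarrow> real \<Rightarrow> ('d \<Rightarrow> nat) \<Rightarrow> ('d \<Rightarrow> nat \<Rightarrow> real) \<Rightarrow> bool"
  where
  "fair_splitting k f a s r z \<longleftrightarrow>
     (\<exists>F G. F \<union> G = cuboid_idx r \<and> F \<inter> G = {} \<and>
        (\<forall>c \<in> {1..k}.
           measure lebesgue ({x. f x = c} \<inter> (\<Union>J\<in>F. cuboid z J))
             = measure lebesgue ({x. f x = c} \<inter> cbox a (a + s *\<^sub>R One)) / 2 \<and>
           measure lebesgue ({x. f x = c} \<inter> (\<Union>J\<in>G. cuboid z J))
             = measure lebesgue ({x. f x = c} \<inter> cbox a (a + s *\<^sub>R One)) / 2))"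

definition B_set :: "nat \<Rightarrow> nat \<Rightarrow> ('d \<Rightarrow> nat) \<Rightarrow> (real^'d \<Rightarrow> nat) \<Rightarrow> bool" where
  "B_set k n r f \<longleftrightarrow>
     (\<exists>a s z. s > 0 \<and> cbox a (a + s *\<^sub>R One) \<subseteq> symbox (real n) \<and>
        splitting a s r z \<and> granularity_ge r z (1 / real n) \<and>
        fair_splitting k f a s r z)"

end

theory Submission
  imports Defs
begin
lemma box_meas: "measure lebesgue (cbox (u::real^'d) v) = (\<Prod>i\<in>UNIV. max 0 (v$i - u$i))"
proof (cases "cbox u v = {}")
  case True
  then obtain i where "v$i < u$i" by (metis interval_ne_empty_cart(1) not_le)
  then have "max 0 (v$i - u$i) = 0" by simp
  then have "(\<Prod>i\<in>UNIV. max 0 (v$i - u$i)) = 0" by (meson UNIV_I finite prod_zero)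
  then show ?thesis using True by simp
next
  case False
  then have "\<And>i. u$i \<le> v$i" by (simp add: interval_ne_empty_cart)
  then show ?thesis using False content_cbox_cart[OF False] by simp
qed

lemma box_diff_lim:
  fixes p q :: "nat \<Rightarrow> 'd::finite \<Rightarrow> real"
  assumes "\<And>i. (\<lambda>m. p m i) \<longlonglongrightarrow> p' i" "\<And>i. (\<lambda>m. q m i) \<longlonglongrightarrow> q' i"
  shows "(\<lambda>m. measure lebesgue (cbox (\<chi> i. p m i) (\<chi> i. q m i) - cbox (\<chi> i. p' i) (\<chi> i. q' i))) \<longlonglongrightarrow> 0"
    and "(\<lambda>m. measure lebesgue (cbox (\<chi> i. p' i) (\<chi> i. q' i) - cbox (\<chi> i. p m i) (\<chi> i. q m i))) \<longlonglongrightarrow> 0"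
proof -
  define P where "P m = (\<chi> i. p m i)" for m
  define Q where "Q m = (\<chi> i. q m i)" for m
  define P' where "P' = (\<chi> i. p' i)"
  define Q' where "Q' = (\<chi> i. q' i)"
  have eqI: "measure lebesgue (cbox (P m) (Q m) \<inter> cbox P' Q') =
     (\<Prod>i\<in>UNIV. max 0 (min (q m i) (q' i) - max (p m i) (p' i)))" for m
    unfolding Int_interval_cart interval_cbox_cart by (simp add: box_meas P_def Q_def P'_def Q'_def)
  have eq1: "measure lebesgue (cbox (P m) (Q m)) = (\<Prod>i\<in>UNIV. max 0 (q m i - p m i))" for m
    by (simp add: box_meas P_def Q_def)
  have eq2: "measure lebesgue (cbox P' Q') = (\<Prod>i\<in>UNIV. max 0 (q' i - p' i))"
    by (simp add: box_meas P'_def Q'_def)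
  have dif: "measure lebesgue (cbox a b - cbox c d) = measure lebesgue (cbox a b) - measure lebesgue (cbox a b \<inter> cbox c d)" for a b c d :: "real^'d"
  proof -
    have e: "cbox a b - cbox c d = cbox a b - (cbox a b \<inter> cbox c d)" by auto
    have fin: "emeasure lebesgue (cbox a b) \<noteq> \<infinity>"
      using fmeasurableD2[OF lmeasurable_cbox] by simp
    have "measure lebesgue (cbox a b - (cbox a b \<inter> cbox c d)) = measure lebesgue (cbox a b) - measure lebesgue (cbox a b \<inter> cbox c d)"
      by (rule measure_Diff[OF fin]) (auto intro: fmeasurableD[OF lmeasurable_cbox])
    then show ?thesis by (simp only: e)
  qed
  have lim1: "(\<lambda>m. \<Prod>i\<in>UNIV. max 0 (q m i - p m i)) \<longlonglongrightarrow> (\<Prod>i\<in>UNIV. max 0 (q' i - p' i))"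
    by (intro tendsto_intros assms)
  have limI: "(\<lambda>m. \<Prod>i\<in>UNIV. max 0 (min (q m i) (q' i) - max (p m i) (p' i))) \<longlonglongrightarrow> (\<Prod>i\<in>UNIV. max 0 (q' i - p' i))"
  proof -
    have "(\<lambda>m. \<Prod>i\<in>UNIV. max 0 (min (q m i) (q' i) - max (p m i) (p' i))) \<longlonglongrightarrow> (\<Prod>i\<in>UNIV. max 0 (min (q' i) (q' i) - max (p' i) (p' i)))"
      by (intro tendsto_intros assms)
    then show ?thesis by simp
  qed
  have eqI': "measure lebesgue (cbox P' Q' \<inter> cbox (P m) (Q m)) = (\<Prod>i\<in>UNIV. max 0 (min (q m i) (q' i) - max (p m i) (p' i)))" for m
    using eqI[of m] by (simp add: Int_commute)
  show "(\<lambda>m. measure lebesgue (cbox (\<chi> i. p m i) (\<chi> i. q m i) - cbox (\<chi> i. p' i) (\<chi> i. q' i))) \<longlonglongrightarrow> 0"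
  proof -
    have "(\<lambda>m. (\<Prod>i\<in>UNIV. max 0 (q m i - p m i)) - (\<Prod>i\<in>UNIV. max 0 (min (q m i) (q' i) - max (p m i) (p' i)))) \<longlonglongrightarrow> (\<Prod>i\<in>UNIV. max 0 (q' i - p' i)) - (\<Prod>i\<in>UNIV. max 0 (q' i - p' i))"
      by (intro tendsto_diff lim1 limI)
    then show ?thesis
      using dif eqI eq1 unfolding P_def Q_def P'_def Q'_def by simp
  qed
  show "(\<lambda>m. measure lebesgue (cbox (\<chi> i. p' i) (\<chi> i. q' i) - cbox (\<chi> i. p m i) (\<chi> i. q m i))) \<longlonglongrightarrow> 0"
  proof -
    have "(\<lambda>m. (\<Prod>i\<in>UNIV. max 0 (q' i - p' i)) - (\<Prod>i\<in>UNIV. max 0 (min (q m i) (q' i) - max (p m i) (p' i)))) \<longlonglongrightarrow> (\<Prod>i\<in>UNIV. max 0 (q' i - p' i)) - (\<Prod>i\<in>UNIV. max 0 (q' i - p' i))"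
      by (intro tendsto_diff tendsto_const limI)
    then show ?thesis
      using dif eqI' eq2 unfolding P_def Q_def P'_def Q'_def by simp
  qed
qed
lemma est:
  fixes f g :: "real^'d \<Rightarrow> nat"
  assumes E: "{x. f x = c} \<in> sets lebesgue" and E': "{x. g x = c} \<in> sets lebesgue"
    and A: "A \<in> lmeasurable" and B: "B \<in> lmeasurable" and AS: "A \<subseteq> S"
    and D: "{x\<in>S. f x \<noteq> g x} \<in> lmeasurable"
  shows "measure lebesgue ({x. f x = c} \<inter> A) \<le> measure lebesgue ({x. g x = c} \<inter> B) + measure lebesgue {x\<in>S. f x \<noteq> g x} + measure lebesgue (A - B)"
proof -
  let ?Y = "{x. g x = c} \<inter> B" and ?D = "{x\<in>S. f x \<noteq> g x}"
  have Y: "?Y \<in> lmeasurable" using fmeasurable_Int_fmeasurable[OF B E'] by (simp add: Int_commute)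
  have AB: "A - B \<in> lmeasurable" using A B by (simp add: fmeasurable_Diff)
  have sub: "{x. f x = c} \<inter> A \<subseteq> (?Y \<union> ?D) \<union> (A - B)" using AS by auto
  have "measure lebesgue ({x. f x = c} \<inter> A) \<le> measure lebesgue ((?Y \<union> ?D) \<union> (A - B))"
    using sub Y D AB E A by (intro measure_mono_fmeasurable) auto
  also have "\<dots> \<le> measure lebesgue (?Y \<union> ?D) + measure lebesgue (A - B)"
    using Y D AB by (intro measure_Un_le) auto
  also have "measure lebesgue (?Y \<union> ?D) \<le> measure lebesgue ?Y + measure lebesgue ?D"
    using Y D by (intro measure_Un_le) auto
  finally show ?thesis by simp
qed
lemma neq_meas:
  assumes "meas_coloring k f" "meas_coloring k g"
  shows "{x. f x \<noteq> g x} \<in> sets lebesgue"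
proof -
  have "{x. f x \<noteq> g x} = (\<Union>c\<in>{1..k}. {x. f x = c} - {x. g x = c})"
    using assms unfolding meas_coloring_def by auto
  moreover have "(\<Union>c\<in>{1..k}. {x. f x = c} - {x. g x = c}) \<in> sets lebesgue"
    using assms unfolding meas_coloring_def by (intro sets.finite_UN) auto
  ultimately show ?thesis by simp
qed

lemma one_nth[simp]: "(One::real^'d) $ i = 1"
  by (metis axis_in_Basis_iff cart_eq_inner_axis inner_sum_Basis Basis_real_def insertI1)

lemma sym_sub_meas: "{x\<in>symbox N. f x \<noteq> g x} \<in> sets lebesgue \<Longrightarrow> True" by simp

lemma symbox_meas: "measure lebesgue (symbox (real N) :: (real^'d) set) = (2 * real N) ^ CARD('d)"
  unfolding symbox_def box_meas
  by (simp only: vector_scaleR_component vector_uminus_component one_nth) (simp add: power_mult_distrib)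

lemma dn_bound:
  fixes f g :: "real^'d::finite \<Rightarrow> nat"
  assumes "{x. f x \<noteq> g x} \<in> sets lebesgue" "N \<ge> 1"
  shows "0 \<le> col_dn N f g" "col_dn N f g \<le> 2 ^ CARD('d)"
proof -
  have m: "measure lebesgue {x \<in> symbox (real N). f x \<noteq> g x} \<le> measure lebesgue (symbox (real N) :: (real^'d) set)"
  proof (intro measure_mono_fmeasurable)
    have "{x \<in> symbox (real N). f x \<noteq> g x} = symbox (real N) \<inter> {x. f x \<noteq> g x}" by auto
    then show "{x \<in> symbox (real N). f x \<noteq> g x} \<in> sets lebesgue"
      using assms(1) unfolding symbox_def by (simp add: sets.Int)
  qed (auto simp: symbox_def)
  show "0 \<le> col_dn N f g" unfolding col_dn_def by simp
  have pos: "0 < real N ^ CARD('d)" using assms(2) by simp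
  show "col_dn N f g \<le> 2 ^ CARD('d)"
    unfolding col_dn_def using m symbox_meas[of N, where 'd='d] pos
    by (simp add: pos_divide_le_eq power_mult_distrib)
qed

lemma dist_bound:
  fixes f g :: "real^'d::finite \<Rightarrow> nat"
  assumes "{x. f x \<noteq> g x} \<in> sets lebesgue" "N \<ge> 1"
  shows "measure lebesgue {x \<in> symbox (real N). f x \<noteq> g x} \<le> real N ^ CARD('d) * 2 ^ (N+1) * col_dist f g"
proof -
  let ?t = "\<lambda>m. col_dn (Suc m) f g / 2 ^ (Suc m + 1)"
  have nn: "0 \<le> ?t m" for m using dn_bound[OF assms(1), of "Suc m"] by simp
  have "summable (\<lambda>m. 2 ^ CARD('d) * (1/2) ^ (Suc m + 1) :: real)"
    by (intro summable_mult summable_geometric_iff[THEN iffD2] summable_ignore_initial_segment) auto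
  then have sm: "summable ?t"
  proof (rule summable_comparison_test[rotated])
    show "\<exists>N. \<forall>m\<ge>N. norm (?t m) \<le> 2 ^ CARD('d) * (1/2) ^ (Suc m + 1)"
      using dn_bound[OF assms(1)] by (auto simp: power_divide divide_right_mono)
  qed
  obtain m where m: "N = Suc m" using assms(2) by (cases N) auto
  have "?t m \<le> col_dist f g"
    unfolding col_dist_def using sum_le_suminf[OF sm, of "{m}"] nn by simp
  then have "col_dn N f g \<le> 2 ^ (N+1) * col_dist f g"
    using m by (simp add: field_simps)
  then show ?thesis
    using assms(2) unfolding col_dn_def by (simp add: field_simps)
qed
lemma cube_nth[simp]: "((a::real^'d) + s *\<^sub>R One) $ i = a $ i + s"
  by (simp only: vector_add_component vector_scaleR_component one_nth) simp

lemma chain_mono: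
  fixes z :: "nat \<Rightarrow> real"
  assumes "\<forall>j\<le>R. z j < z (Suc j)" "j \<le> j'" "j' \<le> Suc R"
  shows "z j \<le> z j'"
  using assms(2,3)
proof (induction j' rule: dec_induct)
  case base then show ?case by simp
next
  case (step q)
  then have "z j \<le> z q" by simp
  also have "z q \<le> z (Suc q)" using assms(1) step by force
  finally show ?case .
qed

lemma cuboid_sub:
  assumes "splitting a s r z" "J \<in> cuboid_idx r"
  shows "cuboid z J \<subseteq> cbox a (a + s *\<^sub>R One)"
proof
  fix x assume x: "x \<in> cuboid z J"
  show "x \<in> cbox a (a + s *\<^sub>R One)"
    unfolding mem_box_cart
  proof
    fix i
    have sp: "z i 0 = a $ i" "z i (r i + 1) = a $ i + s" "\<forall>j\<le>r i. z i j < z i (Suc j)"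
      using assms(1) unfolding splitting_def by auto
    have Ji: "J i \<le> r i" using assms(2) unfolding cuboid_idx_def by auto
    have "z i 0 \<le> z i (J i)" using chain_mono[OF sp(3), of 0 "J i"] Ji by simp
    moreover have "z i (Suc (J i)) \<le> z i (r i + 1)" using chain_mono[OF sp(3), of "Suc (J i)" "r i + 1"] Ji by simp
    moreover have "z i (J i) \<le> x $ i \<and> x $ i \<le> z i (Suc (J i))"
      using x unfolding cuboid_def mem_box_cart by simp
    ultimately show "a $ i \<le> x $ i \<and> x $ i \<le> (a + s *\<^sub>R One) $ i"
      using sp by (simp only: cube_nth) linarith
  qed
qed

lemma extract_sub:
  fixes x :: "nat \<Rightarrow> 'a \<Rightarrow> real"
  assumes "finite S" "\<And>m p. p \<in> S \<Longrightarrow> \<bar>x m p\<bar> \<le> B"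
  shows "\<exists>\<sigma>. strict_mono \<sigma> \<and> (\<forall>p\<in>S. convergent (\<lambda>m. x (\<sigma> m) p))"
  using assms(1,2)
proof (induction S rule: finite_induct)
  case empty
  then show ?case by (intro exI[of _ id]) (auto simp: strict_mono_def)
next
  case (insert p S)
  then obtain \<sigma> where \<sigma>: "strict_mono \<sigma>" "\<forall>q\<in>S. convergent (\<lambda>m. x (\<sigma> m) q)" by blast
  obtain \<tau> where \<tau>: "strict_mono \<tau>" "monoseq (\<lambda>m. x (\<sigma> (\<tau> m)) p)"
    using seq_monosub[of "\<lambda>m. x (\<sigma> m) p"] by auto
  have "Bseq (\<lambda>m. x (\<sigma> (\<tau> m)) p)"
    using insert.prems[of p] by (intro BseqI'[where K=B]) auto
  then have cp: "convergent (\<lambda>m. x (\<sigma> (\<tau> m)) p)"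
    using \<tau>(2) Bseq_monoseq_convergent by blast
  have "convergent (\<lambda>m. x (\<sigma> (\<tau> m)) q)" if "q \<in> S" for q
    using convergent_subseq_convergent[OF \<sigma>(2)[rule_format, OF that] \<tau>(1)] by (simp add: o_def)
  moreover have "strict_mono (\<lambda>m. \<sigma> (\<tau> m))" using strict_mono_o[OF \<sigma>(1) \<tau>(1)] by (simp add: o_def)
  ultimately show ?case using cp
    by (intro exI[of _ "\<sigma> \<circ> \<tau>"]) auto
qed

lemma conv_union:
  fixes f :: "nat \<Rightarrow> real^'d::finite \<Rightarrow> nat" and g :: "real^'d \<Rightarrow> nat"
    and P Q :: "nat \<Rightarrow> 'j \<Rightarrow> 'd \<Rightarrow> real"
  assumes F: "finite F"
    and PL: "\<And>J i. J \<in> F \<Longrightarrow> (\<lambda>m. P m J i) \<longlonglongrightarrow> P' J i"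
    and QL: "\<And>J i. J \<in> F \<Longrightarrow> (\<lambda>m. Q m J i) \<longlonglongrightarrow> Q' J i"
    and US: "\<And>m. (\<Union>J\<in>F. cbox (\<chi> i. P m J i) (\<chi> i. Q m J i)) \<subseteq> S"
    and US': "(\<Union>J\<in>F. cbox (\<chi> i. P' J i) (\<chi> i. Q' J i)) \<subseteq> S"
    and DL: "(\<lambda>m. measure lebesgue {x\<in>S. f m x \<noteq> g x}) \<longlonglongrightarrow> 0"
    and DM: "\<And>m. {x\<in>S. f m x \<noteq> g x} \<in> lmeasurable"
    and EM: "\<And>m. {x. f m x = c} \<in> sets lebesgue" and EM': "{x. g x = c} \<in> sets lebesgue"
  shows "(\<lambda>m. measure lebesgue ({x. f m x = c} \<inter> (\<Union>J\<in>F. cbox (\<chi> i. P m J i) (\<chi> i. Q m J i))))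
          \<longlonglongrightarrow> measure lebesgue ({x. g x = c} \<inter> (\<Union>J\<in>F. cbox (\<chi> i. P' J i) (\<chi> i. Q' J i)))"
proof -
  define U where "U m = (\<Union>J\<in>F. cbox (\<chi> i. P m J i) (\<chi> i. Q m J i))" for m
  define U' where "U' = (\<Union>J\<in>F. cbox (\<chi> i. P' J i) (\<chi> i. Q' J i))"
  have UM: "U m \<in> lmeasurable" for m unfolding U_def using F by (intro fmeasurable.finite_UN) auto
  have UM': "U' \<in> lmeasurable" unfolding U'_def using F by (intro fmeasurable.finite_UN) auto
  have L1: "(\<lambda>m. measure lebesgue (U m - U')) \<longlonglongrightarrow> 0"
  proof (rule Lim_null_comparison)
    show "\<forall>\<^sub>F m in sequentially. norm (measure lebesgue (U m - U')) \<le>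
       (\<Sum>J\<in>F. measure lebesgue (cbox (\<chi> i. P m J i) (\<chi> i. Q m J i) - cbox (\<chi> i. P' J i) (\<chi> i. Q' J i)))"
    proof (intro always_eventually allI)
      fix m
      have "U m - U' \<subseteq> (\<Union>J\<in>F. cbox (\<chi> i. P m J i) (\<chi> i. Q m J i) - cbox (\<chi> i. P' J i) (\<chi> i. Q' J i))"
        unfolding U_def U'_def by blast
      then have "measure lebesgue (U m - U') \<le> measure lebesgue (\<Union>J\<in>F. cbox (\<chi> i. P m J i) (\<chi> i. Q m J i) - cbox (\<chi> i. P' J i) (\<chi> i. Q' J i))"
        using F fmeasurableD[OF UM] fmeasurableD[OF UM'] by (intro measure_mono_fmeasurable fmeasurable.finite_UN sets.Diff fmeasurable_Diff) (auto intro: fmeasurableD)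
      also have "\<dots> \<le> (\<Sum>J\<in>F. measure lebesgue (cbox (\<chi> i. P m J i) (\<chi> i. Q m J i) - cbox (\<chi> i. P' J i) (\<chi> i. Q' J i)))"
        using F by (intro measure_UNION_le) auto
      finally show "norm (measure lebesgue (U m - U')) \<le> \<dots>" by simp
    qed
    show "(\<lambda>m. \<Sum>J\<in>F. measure lebesgue (cbox (\<chi> i. P m J i) (\<chi> i. Q m J i) - cbox (\<chi> i. P' J i) (\<chi> i. Q' J i))) \<longlonglongrightarrow> 0"
      using PL QL by (intro tendsto_null_sum box_diff_lim(1)) auto
  qed
  have L2: "(\<lambda>m. measure lebesgue (U' - U m)) \<longlonglongrightarrow> 0"
  proof (rule Lim_null_comparison)
    show "\<forall>\<^sub>F m in sequentially. norm (measure lebesgue (U' - U m)) \<le>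
       (\<Sum>J\<in>F. measure lebesgue (cbox (\<chi> i. P' J i) (\<chi> i. Q' J i) - cbox (\<chi> i. P m J i) (\<chi> i. Q m J i)))"
    proof (intro always_eventually allI)
      fix m
      have "U' - U m \<subseteq> (\<Union>J\<in>F. cbox (\<chi> i. P' J i) (\<chi> i. Q' J i) - cbox (\<chi> i. P m J i) (\<chi> i. Q m J i))"
        unfolding U_def U'_def by blast
      then have "measure lebesgue (U' - U m) \<le> measure lebesgue (\<Union>J\<in>F. cbox (\<chi> i. P' J i) (\<chi> i. Q' J i) - cbox (\<chi> i. P m J i) (\<chi> i. Q m J i))"
        using F fmeasurableD[OF UM] fmeasurableD[OF UM'] by (intro measure_mono_fmeasurable fmeasurable.finite_UN sets.Diff fmeasurable_Diff) (auto intro: fmeasurableD)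
      also have "\<dots> \<le> (\<Sum>J\<in>F. measure lebesgue (cbox (\<chi> i. P' J i) (\<chi> i. Q' J i) - cbox (\<chi> i. P m J i) (\<chi> i. Q m J i)))"
        using F by (intro measure_UNION_le) auto
      finally show "norm (measure lebesgue (U' - U m)) \<le> \<dots>" by simp
    qed
    show "(\<lambda>m. \<Sum>J\<in>F. measure lebesgue (cbox (\<chi> i. P' J i) (\<chi> i. Q' J i) - cbox (\<chi> i. P m J i) (\<chi> i. Q m J i))) \<longlonglongrightarrow> 0"
      using PL QL by (intro tendsto_null_sum box_diff_lim(2)) auto
  qed
  let ?D = "\<lambda>m. measure lebesgue {x\<in>S. f m x \<noteq> g x}"
  have "(\<lambda>m. measure lebesgue ({x. f m x = c} \<inter> U m) - measure lebesgue ({x. g x = c} \<inter> U')) \<longlonglongrightarrow> 0"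
  proof (rule Lim_null_comparison)
    show "\<forall>\<^sub>F m in sequentially. norm (measure lebesgue ({x. f m x = c} \<inter> U m) - measure lebesgue ({x. g x = c} \<inter> U'))
       \<le> ?D m + measure lebesgue (U m - U') + measure lebesgue (U' - U m)"
    proof (intro always_eventually allI)
      fix m
      have e1: "measure lebesgue ({x. f m x = c} \<inter> U m) \<le> measure lebesgue ({x. g x = c} \<inter> U') + ?D m + measure lebesgue (U m - U')"
        using US[of m] by (intro est EM EM' UM UM' DM) (auto simp: U_def)
      have eqD: "{x\<in>S. g x \<noteq> f m x} = {x\<in>S. f m x \<noteq> g x}" by auto
      have e2: "measure lebesgue ({x. g x = c} \<inter> U') \<le> measure lebesgue ({x. f m x = c} \<inter> U m) + measure lebesgue {x\<in>S. g x \<noteq> f m x} + measure lebesgue (U' - U m)"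
        using US' DM[of m] by (intro est EM EM' UM UM') (auto simp: U'_def eqD)
      have X: "0 \<le> measure lebesgue (U m - U')" "0 \<le> measure lebesgue (U' - U m)" by auto
      note e2' = e2[unfolded eqD]
      show "norm (measure lebesgue ({x. f m x = c} \<inter> U m) - measure lebesgue ({x. g x = c} \<inter> U'))
       \<le> ?D m + measure lebesgue (U m - U') + measure lebesgue (U' - U m)"
        unfolding real_norm_def abs_le_iff using e1 e2' X by linarith
    qed
    show "(\<lambda>m. ?D m + measure lebesgue (U m - U') + measure lebesgue (U' - U m)) \<longlonglongrightarrow> 0"
      using tendsto_add[OF tendsto_add[OF DL L1] L2] by simp
  qed
  then show ?thesis unfolding U_def U'_def by (rule LIM_zero_cancel)
qed
lemma mem_symbox: "x \<in> symbox N \<longleftrightarrow> (\<forall>i. - N \<le> (x::real^'d) $ i \<and> x $ i \<le> N)"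
  unfolding symbox_def mem_box_cart
  by (simp only: vector_uminus_component vector_scaleR_component one_nth) simp

lemma cube_bounds:
  assumes "s > 0" "cbox a (a + s *\<^sub>R One) \<subseteq> symbox N"
  shows "- N \<le> (a::real^'d) $ i" "a $ i + s \<le> N"
proof -
  have "a \<in> cbox a (a + s *\<^sub>R One)" "a + s *\<^sub>R One \<in> cbox a (a + s *\<^sub>R One)"
    using assms(1) unfolding mem_box_cart cube_nth by auto
  then have "a \<in> symbox N" "a + s *\<^sub>R One \<in> symbox N" using assms(2) by auto
  then show "- N \<le> a $ i" "a $ i + s \<le> N" unfolding mem_symbox cube_nth using assms(1) by force+
qed

lemma cube_in_sym:
  assumes "\<And>i. - N \<le> (a::real^'d) $ i \<and> a $ i + s \<le> N"
  shows "cbox a (a + s *\<^sub>R One) \<subseteq> symbox N"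
proof
  fix x assume "x \<in> cbox a (a + s *\<^sub>R One)"
  then have "\<forall>i. a $ i \<le> x $ i \<and> x $ i \<le> a $ i + s" unfolding mem_box_cart cube_nth .
  then show "x \<in> symbox N" unfolding mem_symbox
  proof (intro allI)
    fix i
    assume h: "\<forall>i. a $ i \<le> x $ i \<and> x $ i \<le> a $ i + s"
    show "- N \<le> x $ i \<and> x $ i \<le> N" using h[rule_format, of i] assms[of i] by linarith
  qed
qed

lemma finite_idx: "finite (cuboid_idx (r :: 'd::finite \<Rightarrow> nat))"
proof -
  have "cuboid_idx r = Pi\<^sub>E UNIV (\<lambda>i. {..r i})"
    unfolding PiE_UNIV_domain by (auto simp: cuboid_idx_def Pi_def)
  then show ?thesis by (simp add: finite_PiE)
qed

theorem mainTheorem2: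
  fixes k n :: nat and r :: "'d::finite \<Rightarrow> nat" and g :: "real^'d \<Rightarrow> nat"
  assumes "k \<ge> 1" and "n \<ge> 1" and "\<forall>i. r i \<ge> 1"
    and "meas_coloring k g"
    and "\<forall>\<epsilon>>0. \<exists>f. meas_coloring k f \<and> B_set k n r f \<and> col_dist f g < \<epsilon>"
  shows "B_set k n r g"
proof -
  have "\<forall>m. \<exists>f. meas_coloring k f \<and> B_set k n r f \<and> col_dist f g < 1 / real (Suc m)"
    using assms(5) by simp
  then obtain ff where ffall: "\<forall>m. meas_coloring k (ff m) \<and> B_set k n r (ff m) \<and> col_dist (ff m) g < 1 / real (Suc m)"
    using choice[of "\<lambda>m f. meas_coloring k f \<and> B_set k n r f \<and> col_dist f g < 1 / real (Suc m)"] by blast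
  have ffc: "\<And>m. meas_coloring k (ff m)" and ffB: "\<And>m. B_set k n r (ff m)"
    and ffd: "\<And>m. col_dist (ff m) g < 1 / real (Suc m)" using ffall by auto
  define idx where "idx = cuboid_idx r"
  define fair where "fair f a s z F \<longleftrightarrow> (\<forall>c\<in>{1..k}.
           measure lebesgue ({x. f x = c} \<inter> (\<Union>J\<in>F. cuboid z J))
             = measure lebesgue ({x. f x = c} \<inter> cbox a (a + s *\<^sub>R One)) / 2 \<and>
           measure lebesgue ({x. f x = c} \<inter> (\<Union>J\<in>idx - F. cuboid z J))
             = measure lebesgue ({x. f x = c} \<inter> cbox a (a + s *\<^sub>R One)) / 2)"
    for f :: "real^'d \<Rightarrow> nat" and a s z F
  define RR where "RR m a s z F \<longleftrightarrow> s > 0 \<and> cbox a (a + s *\<^sub>R One) \<subseteq> symbox (real n) \<and>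
        splitting a s r z \<and> granularity_ge r z (1 / real n) \<and> F \<subseteq> idx \<and> fair (ff m) a s z F" for m a s z F
  have "\<exists>p. RR m (fst p) (fst (snd p)) (fst (snd (snd p))) (snd (snd (snd p)))" for m
  proof -
    obtain a s z where as: "s > 0" "cbox a (a + s *\<^sub>R One) \<subseteq> symbox (real n)"
        "splitting a s r z" "granularity_ge r z (1 / real n)" "fair_splitting k (ff m) a s r z"
      using ffB[of m] unfolding B_set_def by blast
    then obtain F G where FG: "F \<union> G = idx" "F \<inter> G = {}" and
      fc: "\<forall>c \<in> {1..k}.
           measure lebesgue ({x. ff m x = c} \<inter> (\<Union>J\<in>F. cuboid z J))
             = measure lebesgue ({x. ff m x = c} \<inter> cbox a (a + s *\<^sub>R One)) / 2 \<and>
           measure lebesgue ({x. ff m x = c} \<inter> (\<Union>J\<in>G. cuboid z J))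
             = measure lebesgue ({x. ff m x = c} \<inter> cbox a (a + s *\<^sub>R One)) / 2"
      unfolding fair_splitting_def idx_def by blast
    have "G = idx - F" using FG by blast
    then have "fair (ff m) a s z F" unfolding fair_def using fc by simp
    then have "RR m a s z F" unfolding RR_def using as FG by blast
    then show ?thesis by (intro exI[of _ "(a,s,z,F)"]) simp
  qed
  then obtain pp where pp: "\<forall>m. RR m (fst (pp m)) (fst (snd (pp m))) (fst (snd (snd (pp m)))) (snd (snd (snd (pp m))))"
    using choice[of "\<lambda>m p. RR m (fst p) (fst (snd p)) (fst (snd (snd p))) (snd (snd (snd p)))"] by blast
  define aa where "aa m = fst (pp m)" for m
  define ss where "ss m = fst (snd (pp m))" for m
  define zz where "zz m = fst (snd (snd (pp m)))" for m
  define FF where "FF m = snd (snd (snd (pp m)))" for m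
  have RRm: "RR m (aa m) (ss m) (zz m) (FF m)" for m using pp unfolding aa_def ss_def zz_def FF_def by blast
  have
    P1: "\<And>m. ss m > 0" and P2: "\<And>m. cbox (aa m) (aa m + ss m *\<^sub>R One) \<subseteq> symbox (real n)"
    and P3: "\<And>m. splitting (aa m) (ss m) r (zz m)" and P4: "\<And>m. granularity_ge r (zz m) (1 / real n)"
    and P5: "\<And>m. FF m \<subseteq> idx" and P6: "\<And>m. fair (ff m) (aa m) (ss m) (zz m) (FF m)"
    using RRm[unfolded RR_def] by auto
  have fin_idx: "finite idx" unfolding idx_def by (rule finite_idx)
  have "range FF \<subseteq> Pow idx" using P5 by auto
  then have "finite (range FF)" using fin_idx by (simp add: finite_subset)
  then obtain F0 where "infinite (FF -` {F0})" using inf_img_fin_dom[of FF UNIV] by auto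
  define \<sigma>1 where "\<sigma>1 = enumerate (FF -` {F0})"
  have s1: "strict_mono \<sigma>1" unfolding \<sigma>1_def by (rule strict_mono_enumerate) fact
  have F0: "FF (\<sigma>1 m) = F0" for m
    using enumerate_in_set[OF \<open>infinite (FF -` {F0})\<close>, of m] unfolding \<sigma>1_def by simp
  have zmono: "zz m i j \<le> zz m i j'" if "j \<le> j'" "j' \<le> Suc (r i)" for m i j j'
    using chain_mono[of "r i" "zz m i" j j'] P3[of m] that unfolding splitting_def by auto
  have zbd: "\<bar>zz m i j\<bar> \<le> real n" if "j \<le> Suc (r i)" for m i j
  proof -
    have "- real n \<le> aa m $ i" "aa m $ i + ss m \<le> real n" using cube_bounds[OF P1 P2] by auto
    moreover have "zz m i 0 = aa m $ i" "zz m i (Suc (r i)) = aa m $ i + ss m"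
      using P3[of m] unfolding splitting_def by auto
    moreover have "zz m i 0 \<le> zz m i j" "zz m i j \<le> zz m i (Suc (r i))" using zmono that by auto
    ultimately show ?thesis by linarith
  qed
  define Sidx where "Sidx = (SIGMA i:(UNIV::'d set). {..Suc (r i)})"
  have "finite Sidx" unfolding Sidx_def by (intro finite_SigmaI) auto
  then obtain \<sigma>2 where s2: "strict_mono \<sigma>2" and cv: "\<forall>p\<in>Sidx. convergent (\<lambda>m. zz (\<sigma>1 (\<sigma>2 m)) (fst p) (snd p))"
    using extract_sub[of Sidx "\<lambda>m p. zz (\<sigma>1 m) (fst p) (snd p)" "real n"] zbd
    unfolding Sidx_def by fastforce
  define \<sigma> where "\<sigma> = \<sigma>1 \<circ> \<sigma>2"
  have s: "strict_mono \<sigma>" unfolding \<sigma>_def using s1 s2 by (rule strict_mono_o)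
  define zl where "zl i j = lim (\<lambda>m. zz (\<sigma> m) i j)" for i j
  have zl: "(\<lambda>m. zz (\<sigma> m) i j) \<longlonglongrightarrow> zl i j" if "j \<le> Suc (r i)" for i j
    using cv that unfolding zl_def Sidx_def \<sigma>_def by (auto simp: convergent_LIMSEQ_iff)
  have FF0: "FF (\<sigma> m) = F0" for m unfolding \<sigma>_def using F0 by simp
  define i0 where "i0 = (undefined :: 'd)"
  define al where "al = (\<chi> i. zl i 0)"
  define sl where "sl = zl i0 (Suc (r i0)) - zl i0 0"
  have zs: "zz m i (Suc (r i)) - zz m i 0 = ss m" "zz m i 0 = aa m $ i" for m i
    using P3[of m] unfolding splitting_def by auto
  have slim: "(\<lambda>m. ss (\<sigma> m)) \<longlonglongrightarrow> zl i (Suc (r i)) - zl i 0" for i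
  proof -
    have "(\<lambda>m. zz (\<sigma> m) i (Suc (r i)) - zz (\<sigma> m) i 0) \<longlonglongrightarrow> zl i (Suc (r i)) - zl i 0"
      by (intro tendsto_diff zl) auto
    then show ?thesis using zs by simp
  qed
  have sl_eq: "zl i (Suc (r i)) - zl i 0 = sl" for i
    unfolding sl_def using LIMSEQ_unique[OF slim[of i] slim[of i0]] .
  have gran: "zl i (Suc j) - zl i j \<ge> 1 / real n" if "j \<le> r i" for i j
  proof (rule LIMSEQ_le_const)
    show "(\<lambda>m. zz (\<sigma> m) i (Suc j) - zz (\<sigma> m) i j) \<longlonglongrightarrow> zl i (Suc j) - zl i j"
      using that by (intro tendsto_diff zl) auto
    show "\<exists>N. \<forall>m\<ge>N. 1 / real n \<le> zz (\<sigma> m) i (Suc j) - zz (\<sigma> m) i j"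
      using P4 that unfolding granularity_ge_def by auto
  qed
  have npos: "1 / real n > 0" using assms(2) by simp
  have spl: "splitting al sl r zl"
    unfolding splitting_def al_def
  proof (rule allI, intro conjI)
    fix i
    show "zl i 0 = (\<chi> i. zl i 0) $ i" by simp
    show "zl i (r i + 1) = (\<chi> i. zl i 0) $ i + sl" using sl_eq[of i] by simp
    show "\<forall>j\<le>r i. zl i j < zl i (Suc j)"
    proof (intro allI impI)
      fix j assume "j \<le> r i"
      then have "1 / real n \<le> zl i (Suc j) - zl i j" by (rule gran)
      then show "zl i j < zl i (Suc j)" using npos by linarith
    qed
  qed
  have grl: "granularity_ge r zl (1 / real n)" unfolding granularity_ge_def using gran by auto
  have slpos: "sl > 0"
  proof -
    have "zl i0 1 - zl i0 0 \<ge> 1 / real n" using gran[of 0 i0] by simp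
    moreover have "zl i0 1 \<le> zl i0 (Suc (r i0))"
      using chain_mono[of "r i0" "zl i0" 1 "Suc (r i0)"] spl unfolding splitting_def by auto
    ultimately show ?thesis using npos unfolding sl_def by linarith
  qed
  have cubel: "cbox al (al + sl *\<^sub>R One) \<subseteq> symbox (real n)"
  proof (rule cube_in_sym)
    fix i
    have "- real n \<le> zl i 0"
    proof (rule LIMSEQ_le_const)
      show "(\<lambda>m. zz (\<sigma> m) i 0) \<longlonglongrightarrow> zl i 0" by (intro zl) auto
      have "- real n \<le> zz (\<sigma> m) i 0" for m using zbd[of 0 i "\<sigma> m"] by (simp add: abs_le_iff)
      then show "\<exists>N. \<forall>m\<ge>N. - real n \<le> zz (\<sigma> m) i 0" by blast
    qed
    moreover have "zl i (Suc (r i)) \<le> real n"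
    proof (rule LIMSEQ_le_const2)
      show "(\<lambda>m. zz (\<sigma> m) i (Suc (r i))) \<longlonglongrightarrow> zl i (Suc (r i))" by (intro zl) auto
      have "zz (\<sigma> m) i (Suc (r i)) \<le> real n" for m using zbd[of "Suc (r i)" i "\<sigma> m"] by (simp add: abs_le_iff)
      then show "\<exists>N. \<forall>m\<ge>N. zz (\<sigma> m) i (Suc (r i)) \<le> real n" by blast
    qed
    ultimately show "- real n \<le> al $ i \<and> al $ i + sl \<le> real n"
      using sl_eq[of i] unfolding al_def by simp
  qed
  let ?S = "symbox (real n) :: (real^'d) set"
  have gm: "{x. g x = c} \<in> sets lebesgue" if "c \<in> {1..k}" for c
    using assms(4) that unfolding meas_coloring_def by auto
  have fm: "{x. ff m x = c} \<in> sets lebesgue" if "c \<in> {1..k}" for m c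
    using ffc[of m] that unfolding meas_coloring_def by auto
  have DM: "{x\<in>?S. ff (\<sigma> m) x \<noteq> g x} \<in> lmeasurable" for m
  proof -
    have "{x\<in>?S. ff (\<sigma> m) x \<noteq> g x} = ?S \<inter> {x. ff (\<sigma> m) x \<noteq> g x}" by auto
    then show ?thesis using fmeasurable_Int_fmeasurable[OF _ neq_meas[OF ffc assms(4)]]
      unfolding symbox_def by simp
  qed
  have DL: "(\<lambda>m. measure lebesgue {x\<in>?S. ff (\<sigma> m) x \<noteq> g x}) \<longlonglongrightarrow> 0"
  proof (rule Lim_null_comparison)
    let ?C = "real n ^ CARD('d) * 2 ^ (n+1)"
    show "\<forall>\<^sub>F m in sequentially. norm (measure lebesgue {x\<in>?S. ff (\<sigma> m) x \<noteq> g x}) \<le> ?C * inverse (real (Suc m))"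
    proof (intro always_eventually allI)
      fix m
      have "measure lebesgue {x\<in>?S. ff (\<sigma> m) x \<noteq> g x} \<le> ?C * col_dist (ff (\<sigma> m)) g"
        using dist_bound[OF neq_meas[OF ffc assms(4)] assms(2)] by simp
      also have "col_dist (ff (\<sigma> m)) g \<le> inverse (real (Suc m))"
      proof -
        have "m \<le> \<sigma> m" using seq_suble[OF s] .
        then have "1 / real (Suc (\<sigma> m)) \<le> 1 / real (Suc m)" by (simp add: frac_le)
        then show ?thesis using ffd[of "\<sigma> m"] by (simp add: inverse_eq_divide)
      qed
      then have "?C * col_dist (ff (\<sigma> m)) g \<le> ?C * inverse (real (Suc m))"
        by (intro mult_left_mono) auto
      finally show "norm (measure lebesgue {x\<in>?S. ff (\<sigma> m) x \<noteq> g x}) \<le> ?C * inverse (real (Suc m))" by simp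
    qed
    show "(\<lambda>m. ?C * inverse (real (Suc m))) \<longlonglongrightarrow> 0"
      using tendsto_mult_right_zero[OF LIMSEQ_inverse_real_of_nat] by simp
  qed
  define cubem where "cubem m = cbox (\<chi> i. zz (\<sigma> m) i 0) (\<chi> i. zz (\<sigma> m) i (Suc (r i)))" for m
  define cubel where "cubel = cbox (\<chi> i. zl i 0) (\<chi> i. zl i (Suc (r i)))"
  have cubem_eq: "cbox (aa m) (aa m + ss m *\<^sub>R One) = cbox (\<chi> i. zz m i 0) (\<chi> i. zz m i (Suc (r i)))" for m
  proof -
    have "aa m = (\<chi> i. zz m i 0)" using zs[of m] by (auto simp: vec_eq_iff)
    moreover have "aa m + ss m *\<^sub>R One = (\<chi> i. zz m i (Suc (r i)))"
      unfolding vec_eq_iff cube_nth using zs[of m] by (auto simp: algebra_simps)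
    ultimately have "aa m = (\<chi> i. zz m i 0)" "aa m + ss m *\<^sub>R One = (\<chi> i. zz m i (Suc (r i)))" by auto
    then show ?thesis by simp
  qed
  have cubel_eq: "cbox al (al + sl *\<^sub>R One) = cubel"
  proof -
    have "al + sl *\<^sub>R One = (\<chi> i. zl i (Suc (r i)))"
      using sl_eq unfolding al_def vec_eq_iff cube_nth by (auto simp: algebra_simps)
    then show ?thesis unfolding cubel_def al_def by simp
  qed
  have cubem_sub: "cubem m \<subseteq> ?S" for m using P2[of "\<sigma> m"] cubem_eq unfolding cubem_def by simp
  have cubel_sub: "cubel \<subseteq> ?S" using cubel cubel_eq by simp
  have cub_conv: "(\<lambda>m. measure lebesgue ({x. ff (\<sigma> m) x = c} \<inter> cubem m)) \<longlonglongrightarrow> measure lebesgue ({x. g x = c} \<inter> cubel)"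
    if c: "c \<in> {1..k}" for c
  proof -
    have "(\<lambda>m. measure lebesgue ({x. ff (\<sigma> m) x = c} \<inter> (\<Union>J\<in>{()}. cbox (\<chi> i. zz (\<sigma> m) i 0) (\<chi> i. zz (\<sigma> m) i (Suc (r i))))))
      \<longlonglongrightarrow> measure lebesgue ({x. g x = c} \<inter> (\<Union>J\<in>{()}. cbox (\<chi> i. zl i 0) (\<chi> i. zl i (Suc (r i)))))"
      by (rule conv_union[where F="{()}" and P="\<lambda>m J i. zz (\<sigma> m) i 0" and Q="\<lambda>m J i. zz (\<sigma> m) i (Suc (r i))"
          and P'="\<lambda>J i. zl i 0" and Q'="\<lambda>J i. zl i (Suc (r i))" and S="?S" and f="\<lambda>m. ff (\<sigma> m)"])
        (use cubem_sub cubel_sub DL DM fm gm c in \<open>auto intro: zl simp: cubem_def cubel_def\<close>)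
    then show ?thesis unfolding cubem_def cubel_def by simp
  qed
  have un_conv: "(\<lambda>m. measure lebesgue ({x. ff (\<sigma> m) x = c} \<inter> (\<Union>J\<in>F. cuboid (zz (\<sigma> m)) J)))
      \<longlonglongrightarrow> measure lebesgue ({x. g x = c} \<inter> (\<Union>J\<in>F. cuboid zl J))"
    if c: "c \<in> {1..k}" and F: "F \<subseteq> idx" for c F
  proof -
    have Jr: "J i \<le> r i" if "J \<in> F" for J i using F that unfolding idx_def cuboid_idx_def by auto
    have sub1: "(\<Union>J\<in>F. cuboid (zz (\<sigma> m)) J) \<subseteq> ?S" for m
      using cuboid_sub[OF P3[of "\<sigma> m"]] P2[of "\<sigma> m"] F unfolding idx_def by blast
    have sub2: "(\<Union>J\<in>F. cuboid zl J) \<subseteq> ?S"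
      using cuboid_sub[OF spl] cubel F unfolding idx_def by blast
    have Jl1: "(\<lambda>m. zz (\<sigma> m) i (J i)) \<longlonglongrightarrow> zl i (J i)" if "J \<in> F" for J i
      using Jr[OF that, of i] by (intro zl) simp
    have Jl2: "(\<lambda>m. zz (\<sigma> m) i (Suc (J i))) \<longlonglongrightarrow> zl i (Suc (J i))" if "J \<in> F" for J i
      using Jr[OF that, of i] by (intro zl) simp
    show ?thesis unfolding cuboid_def
      by (rule conv_union[where F="F" and P="\<lambda>m J i. zz (\<sigma> m) i (J i)" and Q="\<lambda>m J i. zz (\<sigma> m) i (Suc (J i))"
          and P'="\<lambda>J i. zl i (J i)" and Q'="\<lambda>J i. zl i (Suc (J i))" and S="?S" and f="\<lambda>m. ff (\<sigma> m)"])
        (use sub1 sub2 DL DM fm gm c fin_idx F Jl1 Jl2 in \<open>auto intro: finite_subset simp: cuboid_def\<close>)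
  qed
  have fairl: "fair g al sl zl F0"
    unfolding fair_def
  proof (intro ballI conjI)
    fix c assume c: "c \<in> {1..k}"
    have F0i: "F0 \<subseteq> idx" using P5[of "\<sigma> 0"] FF0[of 0] by simp
    have eqs: "measure lebesgue ({x. ff (\<sigma> m) x = c} \<inter> (\<Union>J\<in>F0. cuboid (zz (\<sigma> m)) J))
             = measure lebesgue ({x. ff (\<sigma> m) x = c} \<inter> cubem m) / 2"
          "measure lebesgue ({x. ff (\<sigma> m) x = c} \<inter> (\<Union>J\<in>idx - F0. cuboid (zz (\<sigma> m)) J))
             = measure lebesgue ({x. ff (\<sigma> m) x = c} \<inter> cubem m) / 2" for m
      using P6[of "\<sigma> m"] c FF0[of m] cubem_eq[of "\<sigma> m"] unfolding fair_def cubem_def by auto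
    have L: "(\<lambda>m. measure lebesgue ({x. ff (\<sigma> m) x = c} \<inter> cubem m) / 2) \<longlonglongrightarrow> measure lebesgue ({x. g x = c} \<inter> cubel) / 2"
      by (intro tendsto_divide cub_conv c tendsto_const) auto
    show "measure lebesgue ({x. g x = c} \<inter> (\<Union>J\<in>F0. cuboid zl J)) = measure lebesgue ({x. g x = c} \<inter> cbox al (al + sl *\<^sub>R One)) / 2"
      using LIMSEQ_unique[OF un_conv[OF c F0i]] L eqs(1) cubel_eq by simp
    show "measure lebesgue ({x. g x = c} \<inter> (\<Union>J\<in>idx - F0. cuboid zl J)) = measure lebesgue ({x. g x = c} \<inter> cbox al (al + sl *\<^sub>R One)) / 2"
    proof -
      have A: "(\<lambda>m. measure lebesgue ({x. ff (\<sigma> m) x = c} \<inter> (\<Union>J\<in>idx - F0. cuboid (zz (\<sigma> m)) J)))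
        \<longlonglongrightarrow> measure lebesgue ({x. g x = c} \<inter> (\<Union>J\<in>idx - F0. cuboid zl J))"
        using un_conv[OF c Diff_subset[of idx F0]] .
      have B: "(\<lambda>m. measure lebesgue ({x. ff (\<sigma> m) x = c} \<inter> (\<Union>J\<in>idx - F0. cuboid (zz (\<sigma> m)) J)))
        \<longlonglongrightarrow> measure lebesgue ({x. g x = c} \<inter> cubel) / 2"
        unfolding eqs(2) by (rule L)
      show ?thesis using LIMSEQ_unique[OF A B] cubel_eq by simp
    qed
  qed
  have F0i: "F0 \<subseteq> idx" using P5[of "\<sigma> 0"] FF0[of 0] by simp
  have h1: "F0 \<union> (idx - F0) = cuboid_idx r" using F0i unfolding idx_def by blast
  have h2: "F0 \<inter> (idx - F0) = {}" by blast
  have h3: "\<forall>c\<in>{1..k}.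
       measure lebesgue ({x. g x = c} \<inter> (\<Union>J\<in>F0. cuboid zl J)) = measure lebesgue ({x. g x = c} \<inter> cbox al (al + sl *\<^sub>R One)) / 2 \<and>
       measure lebesgue ({x. g x = c} \<inter> (\<Union>J\<in>idx - F0. cuboid zl J)) = measure lebesgue ({x. g x = c} \<inter> cbox al (al + sl *\<^sub>R One)) / 2"
      using fairl unfolding fair_def .
  have fs: "fair_splitting k g al sl r zl"
    unfolding fair_splitting_def
    by (rule exI[where x=F0], rule exI[where x="idx - F0"]) (intro conjI h1 h2 h3)
  show ?thesis
    unfolding B_set_def
    by (intro exI[where x=al] exI[where x=sl] exI[where x=zl] conjI slpos cubel spl grl fs)
qed
end
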